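(* Let $f$, $Q$, $L$, $d_Q$ be as in the context, let $x^*\in Q$ be a minimizer of $f$ over $Q$ with $f^*=f(x^* )$, and let $T\in\mathbb{N}_0$. Run the algorithm described in the context with $\gamma_t=\frac{t+1}{2}$ for all $0\le t\le T+1$. Then \[ f(u_T)-f^*\le\frac{4L_Td_Q(x^* )}{(T+1)(T+2)}+\sum_{t=0}^{T-1}\frac{4(L_t-L_{t+1})}{(T+1)(T+2)}\Big(d_Q(z_{t+1})-\tfrac12\|z_t-\hat x_{t+1}\|^2\Big). \]
   Context: $\mathbb{R}^n$ carries the standard scalar product $\langle\cdot,\cdot\rangle$ and a (possibly different) norm $\|\cdot\|$, with dual norm $\|u\|_*=\max\{\langle u,x\rangle:\|x\|=1\}$. $Q\subseteq\mathbb{R}^n$ is closed and convex; $f:\mathbb{R}^n\to\mathbb{R}$ is convex, differentiable, attains its minimum on $Q$, and $L>0$ satisfies $\|\nabla f(x)-\nabla f(y)\|_*\le L\|x-y\|$ for all $x,y\in Q$. A distance-generating function for $Q$ is $d_Q:Q\to\mathbb{R}_{\ge0}$ that is continuous on $Q$, strongly convex with modulus 1 w.r.t. $\|\cdot\|$, and whose subdifferential admits a continuous selection $d_Q'$ on $Q^o:=\{x\in Q:\partial d_Q(x)\neq\emptyset\}$. For $z\in Q^o$, $V_z(x)=d_Q(x)-d_Q(z)-\langle d_Q'(z),x-z\rangle$ and $\mathrm{Prox}_{Q,z}(s)=\arg\min_{x\in Q}\{\langle s,x-z\rangle+V_z(x)\}$. The $d_Q$-center is $c(d_Q)=\arg\min_{x\in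 Q}d_Q(x)$, and it is assumed that $d_Q(c(d_Q))=0$. Algorithm (with weights $(\gamma_t)_{t=0}^{T+1}$, $\Gamma_t:=\sum_{k=0}^t\gamma_k$): set $L_0=L$, $x_0=c(d_Q)$, $u_0=\arg\min_{x\in Q}\{\gamma_0(f(x_0)+\langle\nabla f(x_0),x-x_0\rangle)+L_0d_Q(x)\}$, $z_0=u_0$, $\tau_0=\gamma_1/\Gamma_1$, $x_1=\tau_0z_0+(1-\tau_0)u_0$, $\hat x_1=\mathrm{Prox}_{Q,z_0}(\gamma_1\nabla f(x_1)/L_0)$, $u_1=\tau_0\hat x_1+(1-\tau_0)u_0$. For $t=1,\dots,T$: choose $0<L_t\le L$ with $f(u_t)\le f(x_t)+\langle\nabla f(x_t),u_t-x_t\rangle+\frac{L_t}{2}\|u_t-x_t\|^2$; set $z_t=\arg\min_{x\in Q}\{\sum_{k=0}^t\gamma_k(f(x_k)+\langle\nabla f(x_k),x-x_k\rangle)+L_td_Q(x)\}$; set $\tau_t=\gamma_{t+1}/\Gamma_{t+1}$ and $x_{t+1}=\tau_tz_t+(1-\tau_t)u_t$; set $\hat x_{t+1}=\mathrm{Prox}_{Q,z_t}(\gamma_{t+1}\nabla f(x_{t+1})/L_t)$; set $u_{t+1}=\tau_t\hat x_{t+1}+(1-\tau_t)u_t$. *)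

theory Defs
  imports "HOL-Analysis.Analysis"
begin

definition is_norm :: "('a::euclidean_space \<Rightarrow> real) \<Rightarrow> bool" where
  "is_norm N \<longleftrightarrow> (\<forall>x. 0 \<le> N x) \<and> (\<forall>x. N x = 0 \<longleftrightarrow> x = 0)
     \<and> (\<forall>x y. N (x + y) \<le> N x + N y) \<and> (\<forall>c x. N (c *\<^sub>R x) = \<bar>c\<bar> * N x)"

definition dual_norm :: "('a::euclidean_space \<Rightarrow> real) \<Rightarrow> 'a \<Rightarrow> real" where
  "dual_norm N u = Sup {u \<bullet> x | x. N x = 1}"

definition strongly_convex_on ::
  "'a::euclidean_space set \<Rightarrow> ('a \<Rightarrow> real) \<Rightarrow> ('a \<Rightarrow> real) \<Rightarrow> bool" where
  "strongly_convex_on Q N d \<longleftrightarrow>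
     (\<forall>x\<in>Q. \<forall>y\<in>Q. \<forall>a::real. 0 \<le> a \<and> a \<le> 1 \<longrightarrow>
        d (a *\<^sub>R x + (1 - a) *\<^sub>R y)
          \<le> a * d x + (1 - a) * d y - a * (1 - a) / 2 * (N (x - y))^2)"

text \<open>Subdifferential of d (viewed as +infinity outside Q) at x in Q.\<close>
definition subdiff_on :: "'a::euclidean_space set \<Rightarrow> ('a \<Rightarrow> real) \<Rightarrow> 'a \<Rightarrow> 'a set" where
  "subdiff_on Q d x = {s. \<forall>y\<in>Q. d x + s \<bullet> (y - x) \<le> d y}"

definition dom_subdiff :: "'a::euclidean_space set \<Rightarrow> ('a \<Rightarrow> real) \<Rightarrow> 'a set" where
  "dom_subdiff Q d = {x\<in>Q. subdiff_on Q d x \<noteq> {}}"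

definition dist_gen_fun ::
  "'a::euclidean_space set \<Rightarrow> ('a \<Rightarrow> real) \<Rightarrow> ('a \<Rightarrow> real) \<Rightarrow> ('a \<Rightarrow> 'a) \<Rightarrow> bool" where
  "dist_gen_fun Q N d d' \<longleftrightarrow> (\<forall>x\<in>Q. 0 \<le> d x) \<and> continuous_on Q d \<and> strongly_convex_on Q N d
     \<and> (\<forall>x\<in>dom_subdiff Q d. d' x \<in> subdiff_on Q d x) \<and> continuous_on (dom_subdiff Q d) d'"

definition bregman :: "('a::euclidean_space \<Rightarrow> real) \<Rightarrow> ('a \<Rightarrow> 'a) \<Rightarrow> 'a \<Rightarrow> 'a \<Rightarrow> real" where
  "bregman d d' z x = d x - d z - d' z \<bullet> (x - z)"

definition is_argmin_on :: "'a set \<Rightarrow> ('a \<Rightarrow> real) \<Rightarrow> 'a \<Rightarrow> bool" where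
  "is_argmin_on Q \<phi> p \<longleftrightarrow> is_arg_min \<phi> (\<lambda>x. x \<in> Q) p"

definition is_prox ::
  "'a::euclidean_space set \<Rightarrow> ('a \<Rightarrow> real) \<Rightarrow> ('a \<Rightarrow> 'a) \<Rightarrow> 'a \<Rightarrow> 'a \<Rightarrow> 'a \<Rightarrow> bool" where
  "is_prox Q d d' z s p \<longleftrightarrow> is_argmin_on Q (\<lambda>x. s \<bullet> (x - z) + bregman d d' z x) p"

definition gam :: "nat \<Rightarrow> real" where
  "gam t = (real t + 1) / 2"

definition Gam :: "nat \<Rightarrow> real" where
  "Gam t = (\<Sum>k\<le>t. gam k)"

definition tau :: "nat \<Rightarrow> real" where
  "tau t = gam (Suc t) / Gam (Suc t)"

end

theory Submission
  imports Defs
begin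

lemma small_t:
  fixes A B :: real
  assumes "\<And>t. 0 < t \<Longrightarrow> t \<le> 1 \<Longrightarrow> 0 \<le> A + t * B"
  shows "0 \<le> A"
proof (rule ccontr)
  assume "\<not> 0 \<le> A"
  hence A: "A < 0" by simp
  define t where "t = min 1 (- A / (2 * (\<bar>B\<bar> + 1)))"
  have "0 < - A / (2 * (\<bar>B\<bar> + 1))" using A by (intro divide_pos_pos) auto
  hence tpos: "0 < t" by (simp add: t_def)
  have t1: "t \<le> 1" by (simp add: t_def)
  have "t * \<bar>B\<bar> \<le> (- A / (2 * (\<bar>B\<bar> + 1))) * \<bar>B\<bar>"
    by (intro mult_right_mono) (auto simp: t_def)
  also have "\<dots> \<le> - A / 2"
    using A by (simp add: field_simps)
  finally have "t * B \<le> - A / 2"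
    using tpos by (smt (verit) abs_ge_self mult_left_mono)
  with assms[OF tpos t1] A show False by linarith
qed

lemma sc_convex:
  assumes "strongly_convex_on Q N d" "x \<in> Q" "y \<in> Q" "0 \<le> a" "a \<le> 1"
  shows "d (a *\<^sub>R x + (1 - a) *\<^sub>R y) \<le> a * d x + (1 - a) * d y"
proof -
  have "0 \<le> a * (1 - a) / 2 * (N (x - y))^2" using assms by simp
  moreover have "d (a *\<^sub>R x + (1 - a) *\<^sub>R y) \<le> a * d x + (1 - a) * d y - a * (1 - a) / 2 * (N (x - y))^2"
    using assms unfolding strongly_convex_on_def by blast
  ultimately show ?thesis by linarith
qed

lemma sc_bregman:
  assumes sc: "strongly_convex_on Q N d" and Q: "convex Q" and z: "z \<in> Q" and x: "x \<in> Q"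
    and c: "c \<in> subdiff_on Q d z"
  shows "d x - d z - c \<bullet> (x - z) \<ge> 1/2 * (N (x - z))^2"
proof -
  let ?B = "1/2 * (N (x - z))^2"
  have "0 \<le> (d x - d z - c \<bullet> (x - z) - ?B) + a * ?B" if a: "0 < a" "a \<le> 1" for a
  proof -
    let ?p = "a *\<^sub>R x + (1 - a) *\<^sub>R z"
    have p: "?p - z = a *\<^sub>R (x - z)" by (simp add: algebra_simps)
    have pQ: "?p \<in> Q" using Q x z a by (simp add: convex_def)
    have "d z + c \<bullet> (?p - z) \<le> d ?p" using c pQ by (simp add: subdiff_on_def)
    also have "\<dots> \<le> a * d x + (1 - a) * d z - a * (1 - a) / 2 * (N (x - z))^2"
      using sc x z a unfolding strongly_convex_on_def by auto
    finally have "a * (c \<bullet> (x - z)) \<le> a * (d x - d z) - a * ((1 - a) / 2 * (N (x - z))^2)"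
      unfolding p by (simp add: algebra_simps)
    hence "a * (c \<bullet> (x - z)) \<le> a * (d x - d z - (1 - a) / 2 * (N (x - z))^2)"
      by (simp add: algebra_simps)
    hence "c \<bullet> (x - z) \<le> d x - d z - (1 - a) / 2 * (N (x - z))^2"
      using a by simp
    moreover have "(1 - a) / 2 * (N (x - z))^2 = 1/2 * (N (x - z))^2 - a * (1/2 * (N (x - z))^2)"
      by (simp add: field_simps)
    ultimately show ?thesis by linarith
  qed
  from small_t[OF this] show ?thesis by simp
qed


lemma dgf_sc: "dist_gen_fun Q N d d' \<Longrightarrow> strongly_convex_on Q N d"
  by (simp add: dist_gen_fun_def)

lemma norm_sq_expand:
  fixes a b :: "'a::real_inner"
  shows "(norm (a + t *\<^sub>R b))^2 = (norm a)^2 + 2 * t * (a \<bullet> b) + t^2 * (norm b)^2"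
  unfolding power2_norm_eq_inner by (simp add: inner_add_left inner_add_right inner_commute algebra_simps power2_eq_square)

lemma dense_dom:
  fixes Q :: "'a::euclidean_space set"
  assumes dgf: "dist_gen_fun Q N d d'" and Qc: "closed Q" and Qv: "convex Q"
    and x: "x \<in> Q" and e: "e > 0"
  shows "\<exists>w\<in>dom_subdiff Q d. norm (w - x) < e"
proof -
  define \<rho> where "\<rho> = e / 2"
  have dx0: "0 \<le> d x" using dgf x by (simp add: dist_gen_fun_def)
  define k where "k = 8 * (d x + 1) / e^2"
  have kpos: "k > 0" using dx0 e by (simp add: k_def)
  have kr: "k / 2 * \<rho>^2 = d x + 1" using e by (simp add: k_def \<rho>_def field_simps power2_eq_square)
  define \<phi> where "\<phi> y = d y + k / 2 * (norm (y - x))^2" for y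
  let ?S = "Q \<inter> cball x \<rho>"
  have cS: "compact ?S" using Qc by (intro closed_Int_compact) auto
  have nS: "?S \<noteq> {}" using x e by (auto simp: \<rho>_def)
  have dcont: "continuous_on Q d" using dgf by (simp add: dist_gen_fun_def)
  have "continuous_on ?S \<phi>" unfolding \<phi>_def
    by (intro continuous_intros continuous_on_subset[OF dcont]) auto
  from continuous_attains_inf[OF cS nS this] obtain w where wS: "w \<in> ?S" and wmin: "\<And>y. y \<in> ?S \<Longrightarrow> \<phi> w \<le> \<phi> y"
    by blast
  have wQ: "w \<in> Q" using wS by simp
  have glob: "\<phi> w \<le> \<phi> y" if y: "y \<in> Q" for y
  proof (cases "y \<in> cball x \<rho>")
    case True thus ?thesis using wmin y by simp
  next
    case False
    hence "\<rho> < norm (y - x)" by (simp add: dist_norm norm_minus_commute)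
    hence "\<rho>^2 \<le> (norm (y - x))^2" using e by (intro power_mono) (auto simp: \<rho>_def)
    hence "k / 2 * \<rho>^2 \<le> k / 2 * (norm (y - x))^2" using kpos by simp
    moreover have "0 \<le> d y" using dgf y by (simp add: dist_gen_fun_def)
    moreover have "\<phi> w \<le> \<phi> x" using wmin x e by (simp add: \<rho>_def)
    ultimately show ?thesis using kr by (simp add: \<phi>_def)
  qed
  have sub: "(- k *\<^sub>R (w - x)) \<in> subdiff_on Q d w"
    unfolding subdiff_on_def
  proof (safe)
    fix y assume y: "y \<in> Q"
    let ?A = "d y - d w + k * ((w - x) \<bullet> (y - w))"
    let ?B = "k / 2 * (norm (y - w))^2"
    have "0 \<le> ?A + t * ?B" if t: "0 < t" "t \<le> 1" for t
    proof -
      let ?wt = "t *\<^sub>R y + (1 - t) *\<^sub>R w"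
      have wt: "?wt - x = (w - x) + t *\<^sub>R (y - w)" by (simp add: algebra_simps)
      have wtQ: "?wt \<in> Q" using Qv y wQ t by (simp add: convex_def)
      have "\<phi> w \<le> \<phi> ?wt" by (rule glob[OF wtQ])
      also have "\<dots> \<le> t * d y + (1 - t) * d w + k / 2 * (norm (?wt - x))^2"
        unfolding \<phi>_def using sc_convex[OF dgf_sc[OF dgf] y wQ, of t] t by simp
      also have "(norm (?wt - x))^2 = (norm (w - x))^2 + 2 * t * ((w - x) \<bullet> (y - w)) + t^2 * (norm (y - w))^2"
        unfolding wt by (rule norm_sq_expand)
      finally have "0 \<le> t * (?A + t * ?B)"
        by (simp add: \<phi>_def algebra_simps power2_eq_square)
      thus ?thesis using t by (simp add: zero_le_mult_iff)
    qed
    from small_t[OF this] show "d w + (- k *\<^sub>R (w - x)) \<bullet> (y - w) \<le> d y" by simp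
  qed
  hence "w \<in> dom_subdiff Q d" using wQ by (auto simp: dom_subdiff_def)
  moreover have "norm (w - x) < e" using wS e by (simp add: \<rho>_def dist_norm norm_minus_commute)
  ultimately show ?thesis by blast
qed


lemma key_opt:
  fixes Q :: "'a::euclidean_space set"
  assumes dgf: "dist_gen_fun Q N d d'" and Qc: "closed Q" and Qv: "convex Q"
    and L: "L > 0" and z: "z \<in> Q"
    and phi: "\<And>y. y \<in> Q \<Longrightarrow> 0 \<le> G \<bullet> (y - z) + L * (d y - d z)"
    and y: "y \<in> Q"
  shows "0 \<le> (G + L *\<^sub>R d' z) \<bullet> (y - z)"
proof -
  have "(- (1/L) *\<^sub>R G) \<in> subdiff_on Q d z"
    unfolding subdiff_on_def
  proof safe
    fix y assume y: "y \<in> Q"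
    have "0 \<le> (1/L) * (G \<bullet> (y - z) + L * (d y - d z))" using phi[OF y] L by simp
    thus "d z + (- (1/L) *\<^sub>R G) \<bullet> (y - z) \<le> d y" using L by (simp add: algebra_simps)
  qed
  hence zdom: "z \<in> dom_subdiff Q d" using z by (auto simp: dom_subdiff_def)
  have wineq: "0 \<le> (G + L *\<^sub>R d' w) \<bullet> (w - z)" if w: "w \<in> dom_subdiff Q d" for w
  proof -
    have "d' w \<in> subdiff_on Q d w" using dgf w by (simp add: dist_gen_fun_def)
    hence "d w + d' w \<bullet> (z - w) \<le> d z" using z by (simp add: subdiff_on_def)
    moreover have "0 \<le> G \<bullet> (w - z) + L * (d w - d z)" using phi w by (simp add: dom_subdiff_def)
    moreover have "d' w \<bullet> (z - w) = - (d' w \<bullet> (w - z))" by (simp add: inner_diff_right)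
    ultimately have "0 \<le> G \<bullet> (w - z) + L * (d' w \<bullet> (w - z))"
      using L by (smt (verit) mult_left_mono)
    thus ?thesis by (simp add: inner_add_left)
  qed
  show ?thesis
  proof (rule ccontr)
    let ?p = "d' z"
    let ?q = "G + L *\<^sub>R ?p"
    assume "\<not> 0 \<le> ?q \<bullet> (y - z)"
    then obtain \<delta> where \<delta>: "\<delta> > 0" "?q \<bullet> (y - z) = - \<delta>" by (intro that[of "- (?q \<bullet> (y - z))"]) auto
    define D where "D = norm (y - z)"
    have D0: "0 \<le> D" by (simp add: D_def)
    define \<eta> where "\<eta> = \<delta> / (4 * L * (D + 1))"
    have \<eta>: "\<eta> > 0" using \<delta> L D0 by (simp add: \<eta>_def)
    have "continuous_on (dom_subdiff Q d) d'" using dgf by (simp add: dist_gen_fun_def)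
    with zdom \<eta> obtain r where r: "r > 0"
      and rr: "\<And>w. w \<in> dom_subdiff Q d \<Longrightarrow> dist w z < r \<Longrightarrow> dist (d' w) ?p < \<eta>"
      unfolding continuous_on_iff by blast
    define \<rho> where "\<rho> = min 1 (\<delta> / (4 * (norm ?q + 1)))"
    have "0 < 4 * (norm ?q + 1)" by (smt (verit) norm_ge_zero)
    hence "0 < \<delta> / (4 * (norm ?q + 1))" using \<delta> by (intro divide_pos_pos) auto
    hence \<rho>0: "\<rho> > 0" by (simp add: \<rho>_def)
    have \<rho>1: "\<rho> \<le> 1" by (simp add: \<rho>_def)
    have \<rho>q: "norm ?q * \<rho> \<le> \<delta> / 4"
    proof -
      have "norm ?q * \<rho> \<le> norm ?q * (\<delta> / (4 * (norm ?q + 1)))"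
        by (intro mult_left_mono) (auto simp: \<rho>_def)
      also have "\<dots> = \<delta> / 4 * (norm ?q / (norm ?q + 1))" by (simp add: field_simps)
      also have "\<dots> \<le> \<delta> / 4 * 1"
        using \<delta> by (intro mult_left_mono) (auto simp: divide_le_eq, smt (verit) norm_ge_zero)
      finally show ?thesis by simp
    qed
    define h where "h = min 1 (r / (2 * (D + 1)))"
    have h0: "h > 0" using r D0 by (simp add: h_def)
    have h1: "h \<le> 1" by (simp add: h_def)
    have hr: "h * (D + 1) < r"
    proof -
      have "h * (D + 1) \<le> r / (2 * (D + 1)) * (D + 1)"
        using D0 by (intro mult_right_mono) (auto simp: h_def)
      also have "\<dots> = r / 2" using D0 by (simp add: field_simps)
      finally show ?thesis using r by simp
    qed
    define yh where "yh = h *\<^sub>R y + (1 - h) *\<^sub>R z"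
    have yhQ: "yh \<in> Q" using Qv y z h0 h1 by (simp add: convex_def yh_def)
    have yhz: "yh - z = h *\<^sub>R (y - z)" by (simp add: yh_def algebra_simps)
    obtain w where w: "w \<in> dom_subdiff Q d" and wy: "norm (w - yh) < h * \<rho>"
      using dense_dom[OF dgf Qc Qv yhQ, of "h * \<rho>"] h0 \<rho>0 by auto
    define e where "e = w - yh"
    have wz: "w - z = h *\<^sub>R (y - z) + e" using yhz by (simp add: e_def algebra_simps)
    have ne: "norm e < h" using wy \<rho>1 h0 unfolding e_def
      by (smt (verit) mult_left_le)
    have nwz: "norm (w - z) \<le> h * (D + 1)"
    proof -
      have "norm (w - z) \<le> norm (h *\<^sub>R (y - z)) + norm e" unfolding wz by (rule norm_triangle_ineq)
      also have "\<dots> \<le> h * D + h" using ne h0 by (simp add: D_def)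
      finally show ?thesis by (simp add: algebra_simps)
    qed
    hence "dist w z < r" using hr by (simp add: dist_norm)
    hence dw: "norm (d' w - ?p) < \<eta>" using rr[OF w] by (simp add: dist_norm)
    have t1: "?q \<bullet> (w - z) \<le> - h * \<delta> + h * (\<delta> / 4)"
    proof -
      have "?q \<bullet> (w - z) = h * (?q \<bullet> (y - z)) + ?q \<bullet> e" unfolding wz by (simp add: inner_add_right)
      also have "?q \<bullet> e \<le> norm ?q * norm e" by (rule norm_cauchy_schwarz)
      also have "norm ?q * norm e \<le> norm ?q * (h * \<rho>)"
        using wy by (intro mult_left_mono) (auto simp: e_def)
      also have "norm ?q * (h * \<rho>) = h * (norm ?q * \<rho>)" by simp
      also have "\<dots> \<le> h * (\<delta> / 4)" using \<rho>q h0 by (intro mult_left_mono) auto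
      finally show ?thesis using \<delta> by simp
    qed
    have t2: "L * ((d' w - ?p) \<bullet> (w - z)) \<le> h * (\<delta> / 4)"
    proof -
      have "(d' w - ?p) \<bullet> (w - z) \<le> norm (d' w - ?p) * norm (w - z)" by (rule norm_cauchy_schwarz)
      also have "\<dots> \<le> \<eta> * (h * (D + 1))"
        using dw nwz \<eta> by (intro mult_mono) auto
      finally have "L * ((d' w - ?p) \<bullet> (w - z)) \<le> L * (\<eta> * (h * (D + 1)))"
        using L by simp
      also have "\<dots> = h * (\<eta> * (4 * L * (D + 1))) / 4" by (simp add: algebra_simps)
      also have "\<eta> * (4 * L * (D + 1)) = \<delta>" using L D0 by (simp add: \<eta>_def)
      also have "h * \<delta> / 4 = h * (\<delta> / 4)" by simp
      finally show ?thesis .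
    qed
    have "(G + L *\<^sub>R d' w) \<bullet> (w - z) = ?q \<bullet> (w - z) + L * ((d' w - ?p) \<bullet> (w - z))"
      by (simp add: inner_add_left inner_diff_left algebra_simps)
    also have "\<dots> \<le> - h * \<delta> / 2" using t1 t2 by (simp add: field_simps)
    also have "\<dots> < 0" using h0 \<delta> by simp
    finally show False using wineq[OF w] by simp
  qed
qed


lemma norm_equiv:
  fixes N :: "'a::euclidean_space \<Rightarrow> real"
  assumes N: "is_norm N"
  shows "\<exists>C>0. \<forall>x. norm x \<le> C * N x"
proof -
  have Nhom: "N (c *\<^sub>R x) = \<bar>c\<bar> * N x" for c x using N by (simp add: is_norm_def)
  have Ntri: "N (x + y) \<le> N x + N y" for x y using N by (simp add: is_norm_def)
  have N0: "N x = 0 \<longleftrightarrow> x = 0" for x using N by (simp add: is_norm_def)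
  have Nnn: "0 \<le> N x" for x using N by (simp add: is_norm_def)
  have "convex_on UNIV N"
    unfolding convex_on_def
  proof (intro conjI ballI allI impI, simp)
    fix x y :: 'a and u v :: real assume "0 \<le> u" "0 \<le> v" "u + v = 1"
    thus "N (u *\<^sub>R x + v *\<^sub>R y) \<le> u * N x + v * N y"
      using Ntri[of "u *\<^sub>R x" "v *\<^sub>R y"] by (simp add: Nhom)
  qed
  hence cont: "continuous_on UNIV N" by (intro convex_on_continuous) auto
  have "sphere (0::'a) 1 \<noteq> {}" by simp
  from continuous_attains_inf[OF compact_sphere this continuous_on_subset[OF cont]]
  obtain x0 where x0: "x0 \<in> sphere (0::'a) 1" and xm: "\<And>y. y \<in> sphere 0 1 \<Longrightarrow> N x0 \<le> N y"
    by auto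
  have "x0 \<noteq> 0" using x0 by auto
  hence mpos: "N x0 > 0" using N0 Nnn by (metis less_eq_real_def)
  have "norm x \<le> (1 / N x0) * N x" for x
  proof (cases "x = 0")
    case True
    have "N 0 = 0" using N unfolding is_norm_def by blast
    thus ?thesis using True by simp
  next
    case False
    hence "(1 / norm x) *\<^sub>R x \<in> sphere 0 1" by simp
    hence "N x0 \<le> N ((1 / norm x) *\<^sub>R x)" by (rule xm)
    also have "\<dots> = N x / norm x" by (simp add: Nhom)
    finally have "N x0 * norm x \<le> N x" using False by (simp add: field_simps)
    thus ?thesis using mpos by (simp add: field_simps)
  qed
  thus ?thesis using mpos by (intro exI[of _ "1 / N x0"]) auto
qed

lemma dual_le:
  fixes N :: "'a::euclidean_space \<Rightarrow> real"
  assumes N: "is_norm N"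
  shows "u \<bullet> x \<le> dual_norm N u * N x"
proof (cases "x = 0")
  case True
  have "N 0 = 0" using N unfolding is_norm_def by blast
  thus ?thesis using True by simp
next
  case False
  obtain C where C: "C > 0" "\<And>x. norm x \<le> C * N x" using norm_equiv[OF N] by auto
  have Nhom: "N (c *\<^sub>R x) = \<bar>c\<bar> * N x" for c x using N by (simp add: is_norm_def)
  have Npos: "N x > 0" using N False unfolding is_norm_def by (metis less_eq_real_def)
  have bdd: "bdd_above {u \<bullet> y | y. N y = 1}"
  proof (rule bdd_aboveI)
    fix r assume "r \<in> {u \<bullet> y | y. N y = 1}"
    then obtain y where y: "N y = 1" "r = u \<bullet> y" by auto
    have "r \<le> norm u * norm y" using y norm_cauchy_schwarz by simp
    also have "\<dots> \<le> norm u * C" using C(2)[of y] y by (intro mult_left_mono) auto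
    finally show "r \<le> norm u * C" .
  qed
  have "N ((1 / N x) *\<^sub>R x) = 1" using Npos by (simp add: Nhom)
  hence "u \<bullet> ((1 / N x) *\<^sub>R x) \<le> dual_norm N u"
    unfolding dual_norm_def by (intro cSup_upper[OF _ bdd]) blast
  thus ?thesis using Npos by (simp add: field_simps)
qed

lemma deriv_line:
  assumes f_grad: "\<And>y. (f has_derivative (\<lambda>h. g y \<bullet> h)) (at y)"
  shows "((\<lambda>\<theta>. f (a + \<theta> *\<^sub>R v)) has_real_derivative (g (a + \<theta> *\<^sub>R v) \<bullet> v)) (at \<theta>)"
proof -
  have l: "((\<lambda>\<theta>::real. a + \<theta> *\<^sub>R v) has_derivative (\<lambda>t. t *\<^sub>R v)) (at \<theta>)"
    by (auto intro!: derivative_eq_intros)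
  have "((\<lambda>\<theta>. f (a + \<theta> *\<^sub>R v)) has_derivative (\<lambda>t. g (a + \<theta> *\<^sub>R v) \<bullet> (t *\<^sub>R v))) (at \<theta>)"
    using has_derivative_compose[OF l f_grad] by (simp add: o_def)
  moreover have "(\<lambda>t. g (a + \<theta> *\<^sub>R v) \<bullet> (t *\<^sub>R v)) = (*) (g (a + \<theta> *\<^sub>R v) \<bullet> v)"
    by (auto simp: mult.commute)
  ultimately show ?thesis by (simp add: has_field_derivative_def)
qed

lemma grad_ineq:
  assumes f_convex: "convex_on UNIV f"
    and f_grad: "\<And>y. (f has_derivative (\<lambda>h. g y \<bullet> h)) (at y)"
  shows "f x + g x \<bullet> (y - x) \<le> f y"
proof -
  define h where "h \<theta> = f (x + \<theta> *\<^sub>R (y - x))" for \<theta> :: real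
  have "convex_on UNIV h"
  proof (rule convex_onI)
    fix t a b :: real assume t: "0 < t" "t < 1"
    have "h ((1 - t) *\<^sub>R a + t *\<^sub>R b) = f ((1 - t) *\<^sub>R (x + a *\<^sub>R (y - x)) + t *\<^sub>R (x + b *\<^sub>R (y - x)))"
      unfolding h_def by (simp add: algebra_simps)
    also have "\<dots> \<le> (1 - t) * h a + t * h b"
      unfolding h_def using convex_onD[OF f_convex, of t] t by simp
    finally show "h ((1 - t) *\<^sub>R a + t *\<^sub>R b) \<le> (1 - t) * h a + t * h b" .
  qed simp
  moreover have "(h has_real_derivative (g x \<bullet> (y - x))) (at 0 within UNIV)"
  proof -
    have "h = (\<lambda>\<theta>. f (x + \<theta> *\<^sub>R (y - x)))" by (simp add: h_def fun_eq_iff)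
    thus ?thesis using deriv_line[OF f_grad, of x "y - x" 0] by simp
  qed
  ultimately have "h 1 - h 0 \<ge> (g x \<bullet> (y - x)) * (1 - 0)"
    by (intro convex_on_imp_above_tangent[where A = UNIV]) auto
  thus ?thesis by (simp add: h_def)
qed

lemma descent:
  assumes N: "is_norm N" and Qv: "convex Q"
    and f_grad: "\<And>y. (f has_derivative (\<lambda>h. g y \<bullet> h)) (at y)"
    and f_lip: "\<And>y y'. y \<in> Q \<Longrightarrow> y' \<in> Q \<Longrightarrow> dual_norm N (g y - g y') \<le> L * N (y - y')"
    and a: "a \<in> Q" and b: "b \<in> Q"
  shows "f b \<le> f a + g a \<bullet> (b - a) + L / 2 * (N (b - a))^2"
proof -
  define v where "v = b - a"
  have Nhom: "N (c *\<^sub>R x) = \<bar>c\<bar> * N x" for c x using N by (simp add: is_norm_def)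
  have Nnn: "0 \<le> N x" for x using N by (simp add: is_norm_def)
  define \<phi> where "\<phi> \<theta> = f (a + \<theta> *\<^sub>R v) - \<theta> * (g a \<bullet> v) - L * \<theta>^2 / 2 * (N v)^2" for \<theta>
  have "\<phi> 1 \<le> \<phi> 0"
  proof (rule DERIV_nonpos_imp_nonincreasing[of 0 1 \<phi>])
    fix \<theta> :: real assume th: "0 \<le> \<theta>" "\<theta> \<le> 1"
    have D: "(\<phi> has_real_derivative (g (a + \<theta> *\<^sub>R v) \<bullet> v - g a \<bullet> v - L * \<theta> * (N v)^2)) (at \<theta>)"
      unfolding \<phi>_def
      by (rule derivative_eq_intros deriv_line[OF f_grad] | simp)+
    have pQ: "a + \<theta> *\<^sub>R v \<in> Q"
    proof -
      have "a + \<theta> *\<^sub>R v = (1 - \<theta>) *\<^sub>R a + \<theta> *\<^sub>R b" by (simp add: v_def algebra_simps)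
      thus ?thesis using Qv a b th by (simp add: convex_def)
    qed
    have "g (a + \<theta> *\<^sub>R v) \<bullet> v - g a \<bullet> v = (g (a + \<theta> *\<^sub>R v) - g a) \<bullet> v" by (simp add: inner_diff_left)
    also have "\<dots> \<le> dual_norm N (g (a + \<theta> *\<^sub>R v) - g a) * N v" by (rule dual_le[OF N])
    also have "\<dots> \<le> L * N (a + \<theta> *\<^sub>R v - a) * N v"
      by (intro mult_right_mono f_lip pQ a Nnn)
    also have "\<dots> = L * \<theta> * (N v)^2" using th by (simp add: Nhom power2_eq_square)
    finally show "\<exists>y. (\<phi> has_real_derivative y) (at \<theta>) \<and> y \<le> 0" using D by (intro exI) auto
  qed simp
  thus ?thesis by (simp add: \<phi>_def v_def)
qed


lemma min_dom:
  assumes L: "L > 0" and z: "z \<in> Q"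
    and phi: "\<And>y. y \<in> Q \<Longrightarrow> 0 \<le> G \<bullet> (y - z) + L * (d y - d z)"
  shows "z \<in> dom_subdiff Q d"
proof -
  have "(- (1/L) *\<^sub>R G) \<in> subdiff_on Q d z"
    unfolding subdiff_on_def
  proof safe
    fix y assume y: "y \<in> Q"
    have "0 \<le> (1/L) * (G \<bullet> (y - z) + L * (d y - d z))" using phi[OF y] L by simp
    thus "d z + (- (1/L) *\<^sub>R G) \<bullet> (y - z) \<le> d y" using L by (simp add: algebra_simps)
  qed
  thus ?thesis using z by (auto simp: dom_subdiff_def)
qed

lemma Gam_closed: "Gam t = (real t + 1) * (real t + 2) / 4"
  by (induction t) (simp_all add: Gam_def gam_def field_simps)

lemma Gam_Suc: "Gam (Suc t) = Gam t + gam (Suc t)"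
  by (simp add: Gam_def)

theorem corollary1:
  fixes Q :: "(real^'n) set" and N :: "real^'n \<Rightarrow> real"
    and f :: "real^'n \<Rightarrow> real" and g :: "real^'n \<Rightarrow> real^'n"
    and d :: "real^'n \<Rightarrow> real" and d' :: "real^'n \<Rightarrow> real^'n"
    and L :: real and xstar :: "real^'n" and T :: nat
    and x u z xh :: "nat \<Rightarrow> real^'n" and Lt :: "nat \<Rightarrow> real"
  assumes norm: "is_norm N"
    and Q: "closed Q" "convex Q"
    and f_convex: "convex_on UNIV f"
    and f_grad: "\<And>y. (f has_derivative (\<lambda>h. g y \<bullet> h)) (at y)"
    and L_pos: "L > 0"
    and f_lip: "\<And>y y'. y \<in> Q \<Longrightarrow> y' \<in> Q \<Longrightarrow> dual_norm N (g y - g y') \<le> L * N (y - y')"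
    and dgf: "dist_gen_fun Q N d d'"
    and xstar: "is_argmin_on Q f xstar"
    and L0: "Lt 0 = L"
    and x0: "is_argmin_on Q d (x 0)"
    and d_center: "d (x 0) = 0"
    and u0: "is_argmin_on Q (\<lambda>y. gam 0 * (f (x 0) + g (x 0) \<bullet> (y - x 0)) + Lt 0 * d y) (u 0)"
    and z0: "z 0 = u 0"
    and Lt_bnd: "\<And>t. 1 \<le> t \<Longrightarrow> t \<le> T \<Longrightarrow> 0 < Lt t \<and> Lt t \<le> L"
    and Lt_desc: "\<And>t. 1 \<le> t \<Longrightarrow> t \<le> T \<Longrightarrow>
        f (u t) \<le> f (x t) + g (x t) \<bullet> (u t - x t) + Lt t / 2 * (N (u t - x t))^2"
    and zt: "\<And>t. 1 \<le> t \<Longrightarrow> t \<le> T \<Longrightarrow>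
        is_argmin_on Q (\<lambda>y. (\<Sum>k\<le>t. gam k * (f (x k) + g (x k) \<bullet> (y - x k))) + Lt t * d y) (z t)"
    and x_step: "\<And>t. t \<le> T \<Longrightarrow> x (Suc t) = tau t *\<^sub>R z t + (1 - tau t) *\<^sub>R u t"
    and xh_step: "\<And>t. t \<le> T \<Longrightarrow> is_prox Q d d' (z t) ((gam (Suc t) / Lt t) *\<^sub>R g (x (Suc t))) (xh (Suc t))"
    and u_step: "\<And>t. t \<le> T \<Longrightarrow> u (Suc t) = tau t *\<^sub>R xh (Suc t) + (1 - tau t) *\<^sub>R u t"
  shows "f (u T) - f xstar \<le>
      4 * Lt T * d xstar / ((real T + 1) * (real T + 2))
      + (\<Sum>t<T. 4 * (Lt t - Lt (Suc t)) / ((real T + 1) * (real T + 2))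
                 * (d (z (Suc t)) - 1/2 * (N (z t - xh (Suc t)))^2))"
proof -
  have sc: "strongly_convex_on Q N d" using dgf by (rule dgf_sc)
  have Nhom: "N (c *\<^sub>R v) = \<bar>c\<bar> * N v" for c v using norm by (simp add: is_norm_def)
  have Nnn: "0 \<le> N v" for v using norm by (simp add: is_norm_def)
  have Nneg: "N (a - b) = N (b - a)" for a b
    using Nhom[of "-1" "b - a"] by simp
  have dnn: "y \<in> Q \<Longrightarrow> 0 \<le> d y" for y using dgf by (simp add: dist_gen_fun_def)
  have argmin: "is_argmin_on Q \<phi> p \<longleftrightarrow> p \<in> Q \<and> (\<forall>y\<in>Q. \<phi> p \<le> \<phi> y)" for \<phi> p
    by (auto simp: is_argmin_on_def is_arg_min_linorder)
  define lin where "lin k y = f (x k) + g (x k) \<bullet> (y - x k)" for k y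
  define psi where "psi t y = (\<Sum>k\<le>t. gam k * lin k y) + Lt t * d y" for t y
  define G where "G t = (\<Sum>k\<le>t. gam k *\<^sub>R g (x k))" for t
  define E where "E t = (\<Sum>s<t. (Lt s - Lt (Suc s)) * (d (z (Suc s)) - 1/2 * (N (z s - xh (Suc s)))^2))" for t
  have psi_diff: "psi t y - psi t w = G t \<bullet> (y - w) + Lt t * (d y - d w)" for t y w
  proof -
    have "psi t y - psi t w = (\<Sum>k\<le>t. gam k * lin k y - gam k * lin k w) + Lt t * (d y - d w)"
      by (simp add: psi_def sum_subtractf algebra_simps)
    also have "(\<Sum>k\<le>t. gam k * lin k y - gam k * lin k w) = (\<Sum>k\<le>t. (gam k *\<^sub>R g (x k)) \<bullet> (y - w))"
      by (intro sum.cong) (auto simp: lin_def algebra_simps inner_diff_right)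
    also have "\<dots> = G t \<bullet> (y - w)" by (simp add: G_def inner_sum_left)
    finally show ?thesis .
  qed
  have Lpos: "0 < Lt t" if "t \<le> T" for t
    using Lt_bnd[of t] that L0 L_pos by (cases "t = 0") auto
  have zmin: "z t \<in> Q \<and> (\<forall>y\<in>Q. psi t (z t) \<le> psi t y)" if t: "t \<le> T" for t
  proof (cases "t = 0")
    case True
    have "psi 0 y = gam 0 * (f (x 0) + g (x 0) \<bullet> (y - x 0)) + Lt 0 * d y" for y
      by (simp add: psi_def lin_def)
    thus ?thesis using u0 z0 True by (simp add: argmin)
  next
    case False
    thus ?thesis using zt[of t] t by (simp add: argmin psi_def lin_def)
  qed
  have zdom: "z t \<in> dom_subdiff Q d" if t: "t \<le> T" for t
  proof (rule min_dom[OF Lpos[OF t]])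
    show "z t \<in> Q" using zmin[OF t] by simp
    fix y assume "y \<in> Q"
    thus "0 \<le> G t \<bullet> (y - z t) + Lt t * (d y - d (z t))"
      using zmin[OF t] psi_diff[of t y "z t"] by auto
  qed
  have x0Q: "x 0 \<in> Q" and x0min: "\<forall>y\<in>Q. d (x 0) \<le> d y" using x0 by (auto simp: argmin)
  have u0Q: "u 0 \<in> Q" using u0 by (simp add: argmin)
  have xsQ: "xstar \<in> Q" using xstar by (simp add: argmin)
  have xhQ: "xh (Suc t) \<in> Q" if "t \<le> T" for t using xh_step[OF that] by (simp add: is_prox_def argmin)
  have claim: "Gam t * f (u t) \<le> psi t (z t) + E t" if "t \<le> T" for t
    using that
  proof (induction t)
    case 0
    have "0 \<in> subdiff_on Q d (x 0)" using x0min by (simp add: subdiff_on_def)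
    from sc_bregman[OF sc Q(2) x0Q u0Q this] d_center
    have dN: "1/2 * (N (u 0 - x 0))^2 \<le> d (u 0)" by simp
    have "f (u 0) \<le> f (x 0) + g (x 0) \<bullet> (u 0 - x 0) + L / 2 * (N (u 0 - x 0))^2"
      by (rule descent[OF norm Q(2) f_grad f_lip x0Q u0Q])
    also have "L / 2 * (N (u 0 - x 0))^2 \<le> L * d (u 0)" using dN L_pos by simp
    finally have "f (u 0) \<le> lin 0 (u 0) + L * d (u 0)" by (simp add: lin_def)
    moreover have "0 \<le> L * d (u 0)" using dnn[OF u0Q] L_pos by simp
    ultimately show ?case using z0 L0 by (simp add: psi_def E_def Gam_def gam_def)
  next
    case (Suc t)
    hence tT: "t < T" and tT': "t \<le> T" by auto
    have IH: "Gam t * f (u t) \<le> psi t (z t) + E t" using Suc tT' by simp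
    define \<gamma> where "\<gamma> = gam (Suc t)"
    define \<Gamma> where "\<Gamma> = Gam t"
    define \<tau> where "\<tau> = tau t"
    define L1 where "L1 = Lt t"
    define L2 where "L2 = Lt (Suc t)"
    define g' where "g' = g (x (Suc t))"
    define zz where "zz = z t"
    define z' where "z' = z (Suc t)"
    define h' where "h' = xh (Suc t)"
    define Nh where "Nh = N (h' - zz)"
    have \<gamma>: "\<gamma> = (real t + 2) / 2" by (simp add: \<gamma>_def gam_def)
    have \<Gamma>: "\<Gamma> = (real t + 1) * (real t + 2) / 4" by (simp add: \<Gamma>_def Gam_closed)
    have \<Gamma>': "Gam (Suc t) = \<Gamma> + \<gamma>" by (simp add: \<Gamma>_def \<gamma>_def Gam_Suc)
    have \<tau>: "\<tau> = \<gamma> / (\<Gamma> + \<gamma>)" using \<Gamma>' by (simp add: \<tau>_def tau_def \<gamma>_def)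
    have \<Gamma>nn: "0 \<le> \<Gamma>" unfolding \<Gamma> by simp
    hence Gpos: "\<Gamma> + \<gamma> > 0" using \<gamma> by simp
    have "0 \<le> \<gamma>" unfolding \<gamma> by simp
    hence \<tau>0: "0 \<le> \<tau>" unfolding \<tau> using Gpos by simp
    have L1pos: "L1 > 0" using Lpos[OF tT'] by (simp add: L1_def)
    have L2pos: "L2 > 0" using Lpos[OF Suc.prems] by (simp add: L2_def)
    have zzQ: "zz \<in> Q" using zmin[OF tT'] by (simp add: zz_def)
    have z'Q: "z' \<in> Q" using zmin[OF Suc.prems] by (simp add: z'_def)
    have h'Q: "h' \<in> Q" using xhQ[OF tT'] by (simp add: h'_def)
    have uxd: "u (Suc t) - x (Suc t) = \<tau> *\<^sub>R (h' - zz)"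
      unfolding u_step[OF tT'] x_step[OF tT'] \<tau>_def h'_def zz_def by (simp add: algebra_simps)
    have desc: "f (u (Suc t)) \<le> f (x (Suc t)) + \<tau> * (g' \<bullet> (h' - zz)) + L2 / 2 * (\<tau>^2 * Nh^2)"
      using Lt_desc[of "Suc t"] Suc.prems uxd
      by (simp add: L2_def g'_def Nh_def Nhom \<tau>0 power_mult_distrib)
    have conv: "f (x (Suc t)) + g' \<bullet> (u t - x (Suc t)) \<le> f (u t)"
      unfolding g'_def by (rule grad_ineq[OF f_convex f_grad])
    have xu: "x (Suc t) - u t = \<tau> *\<^sub>R (zz - u t)" and zx: "zz - x (Suc t) = (1 - \<tau>) *\<^sub>R (zz - u t)"
      unfolding x_step[OF tT'] zz_def \<tau>_def by (simp_all add: algebra_simps)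
    have sc1: "\<Gamma> * \<tau> = \<gamma> * (1 - \<tau>)" using Gpos by (simp add: \<tau> field_simps)
    have lincomb: "\<Gamma> * (g' \<bullet> (x (Suc t) - u t)) = \<gamma> * (g' \<bullet> (zz - x (Suc t)))"
      unfolding xu zx using sc1 by (simp add: mult.assoc[symmetric])
    have G\<tau>: "(\<Gamma> + \<gamma>) * \<tau> = \<gamma>" using Gpos by (simp add: \<tau>)
    have G\<tau>2: "(\<Gamma> + \<gamma>) * \<tau>^2 \<le> 1"
    proof -
      have "(\<Gamma> + \<gamma>) * \<tau>^2 = \<gamma>^2 / (\<Gamma> + \<gamma>)" using Gpos by (simp add: \<tau> power2_eq_square)
      also have "\<dots> \<le> 1" using Gpos by (simp add: \<Gamma> \<gamma> power2_eq_square field_simps)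
      finally show ?thesis .
    qed
    have "L2 / 2 * ((\<Gamma> + \<gamma>) * \<tau>^2 * Nh^2) \<le> L2 / 2 * (1 * Nh^2)"
      using G\<tau>2 L2pos by (intro mult_left_mono mult_right_mono) auto
    hence A: "Gam (Suc t) * f (u (Suc t)) \<le> \<Gamma> * f (u t) + \<gamma> * lin (Suc t) h' + L2 / 2 * Nh^2"
    proof -
      assume q: "L2 / 2 * ((\<Gamma> + \<gamma>) * \<tau>^2 * Nh^2) \<le> L2 / 2 * (1 * Nh^2)"
      have "Gam (Suc t) * f (u (Suc t)) \<le> (\<Gamma> + \<gamma>) * (f (x (Suc t)) + \<tau> * (g' \<bullet> (h' - zz)) + L2 / 2 * (\<tau>^2 * Nh^2))"
        using desc Gpos \<Gamma>' by simp
      also have "\<dots> = \<Gamma> * f (x (Suc t)) + \<gamma> * f (x (Suc t)) + \<gamma> * (g' \<bullet> (h' - zz)) + L2 / 2 * ((\<Gamma> + \<gamma>) * \<tau>^2 * Nh^2)"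
      proof -
        have gen: "(\<Gamma> + \<gamma>) * (X + \<tau> * Y + c * (\<tau>^2 * Z)) = \<Gamma> * X + \<gamma> * X + ((\<Gamma> + \<gamma>) * \<tau>) * Y + c * ((\<Gamma> + \<gamma>) * \<tau>^2 * Z)"
          for X Y Z c :: real by (simp add: algebra_simps)
        show ?thesis unfolding gen G\<tau> ..
      qed
      also have "\<Gamma> * f (x (Suc t)) \<le> \<Gamma> * f (u t) + \<Gamma> * (g' \<bullet> (x (Suc t) - u t))"
      proof -
        have "g' \<bullet> (x (Suc t) - u t) = - (g' \<bullet> (u t - x (Suc t)))" by (simp add: inner_diff_right)
        hence "f (x (Suc t)) \<le> f (u t) + g' \<bullet> (x (Suc t) - u t)" using conv by simp
        hence "\<Gamma> * f (x (Suc t)) \<le> \<Gamma> * (f (u t) + g' \<bullet> (x (Suc t) - u t))"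
          using \<Gamma>nn by (rule mult_left_mono)
        thus ?thesis by (simp add: distrib_left)
      qed
      finally have "Gam (Suc t) * f (u (Suc t)) \<le> \<Gamma> * f (u t) + \<gamma> * (g' \<bullet> (zz - x (Suc t))) + \<gamma> * f (x (Suc t)) + \<gamma> * (g' \<bullet> (h' - zz)) + L2 / 2 * (1 * Nh^2)"
        using q lincomb by linarith
      moreover have "\<gamma> * (g' \<bullet> (zz - x (Suc t))) + \<gamma> * f (x (Suc t)) + \<gamma> * (g' \<bullet> (h' - zz)) = \<gamma> * lin (Suc t) h'"
        by (simp add: lin_def g'_def algebra_simps inner_diff_right)
      ultimately show ?thesis by simp
    qed
    have prox: "\<gamma> * (g' \<bullet> (h' - zz)) + L1 * bregman d d' zz h' \<le> \<gamma> * (g' \<bullet> (z' - zz)) + L1 * bregman d d' zz z'"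
    proof -
      have "(\<gamma> / L1) * (g' \<bullet> (h' - zz)) + bregman d d' zz h' \<le> (\<gamma> / L1) * (g' \<bullet> (z' - zz)) + bregman d d' zz z'"
        using xh_step[OF tT'] z'Q
        by (simp add: is_prox_def argmin \<gamma>_def L1_def g'_def zz_def h'_def)
      hence "L1 * ((\<gamma> / L1) * (g' \<bullet> (h' - zz)) + bregman d d' zz h') \<le> L1 * ((\<gamma> / L1) * (g' \<bullet> (z' - zz)) + bregman d d' zz z')"
        using L1pos by simp
      thus ?thesis using L1pos by (simp add: distrib_left)
    qed
    have dz: "d' zz \<in> subdiff_on Q d zz" using dgf zdom[OF tT'] by (simp add: dist_gen_fun_def zz_def)
    have breg: "1/2 * Nh^2 \<le> bregman d d' zz h'"
      using sc_bregman[OF sc Q(2) zzQ h'Q dz] by (simp add: bregman_def Nh_def)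
    have kk: "0 \<le> (G t + L1 *\<^sub>R d' zz) \<bullet> (z' - zz)"
    proof (rule key_opt[OF dgf Q(1) Q(2) L1pos zzQ _ z'Q])
      fix y assume "y \<in> Q"
      thus "0 \<le> G t \<bullet> (y - zz) + L1 * (d y - d zz)"
        using zmin[OF tT'] psi_diff[of t y zz] by (auto simp: zz_def L1_def)
    qed
    have pz: "L1 * bregman d d' zz z' \<le> psi t z' - psi t zz"
    proof -
      have "L1 * bregman d d' zz z' = L1 * (d z' - d zz) - L1 * (d' zz \<bullet> (z' - zz))"
        by (simp add: bregman_def algebra_simps)
      moreover have "psi t z' - psi t zz = G t \<bullet> (z' - zz) + L1 * (d z' - d zz)"
        using psi_diff by (simp add: L1_def)
      moreover have "(G t + L1 *\<^sub>R d' zz) \<bullet> (z' - zz) = G t \<bullet> (z' - zz) + L1 * (d' zz \<bullet> (z' - zz))"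
        by (simp add: inner_add_left)
      ultimately show ?thesis using kk by linarith
    qed
    have linr: "lin (Suc t) h' - lin (Suc t) z' = g' \<bullet> (h' - zz) - g' \<bullet> (z' - zz)"
      by (simp add: lin_def g'_def inner_diff_right)
    have psiS: "psi (Suc t) z' = psi t z' + \<gamma> * lin (Suc t) z' + (L2 - L1) * d z'"
      by (simp add: psi_def \<gamma>_def L1_def L2_def algebra_simps)
    have ES: "E (Suc t) = E t + (L1 - L2) * d z' - (L1 - L2) * (1/2 * Nh^2)"
      using Nneg[of zz h'] by (simp add: E_def L1_def L2_def z'_def zz_def h'_def Nh_def algebra_simps)
    have m1: "\<gamma> * lin (Suc t) h' - \<gamma> * lin (Suc t) z' = \<gamma> * (g' \<bullet> (h' - zz)) - \<gamma> * (g' \<bullet> (z' - zz))"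
      using linr by (simp add: right_diff_distrib[symmetric])
    have m2: "L2 / 2 * Nh^2 = L1 * (1/2 * Nh^2) - (L1 - L2) * (1/2 * Nh^2)" by (simp add: field_simps)
    have m3: "L1 * (1/2 * Nh^2) \<le> L1 * bregman d d' zz h'" using breg L1pos by simp
    have "Gam (Suc t) * f (u (Suc t)) \<le> psi t zz + E t + \<gamma> * lin (Suc t) h' + L2 / 2 * Nh^2"
      using A IH by (simp add: \<Gamma>_def zz_def)
    also have "\<dots> \<le> psi (Suc t) z' + E (Suc t)"
    proof -
      have m4: "(L2 - L1) * d z' = - ((L1 - L2) * d z')" by (simp add: algebra_simps)
      show ?thesis using prox pz psiS ES m1 m2 m3 m4 by linarith
    qed
    finally show ?case by (simp add: z'_def)
  qed
  have finT: "Gam T * f (u T) \<le> Gam T * f xstar + Lt T * d xstar + E T"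
  proof -
    have "psi T (z T) \<le> psi T xstar" using zmin[of T] xsQ by simp
    also have "\<dots> \<le> (\<Sum>k\<le>T. gam k * f xstar) + Lt T * d xstar"
      unfolding psi_def
    proof -
      have "(\<Sum>k\<le>T. gam k * lin k xstar) \<le> (\<Sum>k\<le>T. gam k * f xstar)"
        by (intro sum_mono mult_left_mono) (auto simp: lin_def gam_def intro: grad_ineq[OF f_convex f_grad])
      thus "(\<Sum>k\<le>T. gam k * lin k xstar) + Lt T * d xstar \<le> (\<Sum>k\<le>T. gam k * f xstar) + Lt T * d xstar" by simp
    qed
    also have "(\<Sum>k\<le>T. gam k * f xstar) = Gam T * f xstar" by (simp add: Gam_def sum_distrib_right)
    finally show ?thesis using claim[of T] by simp
  qed
  define P where "P = (real T + 1) * (real T + 2)"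
  have P: "P > 0" by (simp add: P_def)
  have GT: "Gam T = P / 4" by (simp add: Gam_closed P_def)
  have "f (u T) - f xstar \<le> 4 / P * (Lt T * d xstar + E T)"
  proof -
    have "P / 4 * (f (u T) - f xstar) \<le> Lt T * d xstar + E T" using finT GT by (simp add: algebra_simps)
    hence "4 / P * (P / 4 * (f (u T) - f xstar)) \<le> 4 / P * (Lt T * d xstar + E T)"
      using P by (intro mult_left_mono) auto
    moreover have "4 / P * (P / 4 * (f (u T) - f xstar)) = f (u T) - f xstar" using P by simp
    ultimately show ?thesis by linarith
  qed
  also have "4 / P * (Lt T * d xstar + E T) = 4 * Lt T * d xstar / P
      + (\<Sum>t<T. 4 * (Lt t - Lt (Suc t)) / P * (d (z (Suc t)) - 1/2 * (N (z t - xh (Suc t)))^2))"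
  proof -
    have "4 / P * E T = (\<Sum>t<T. 4 * (Lt t - Lt (Suc t)) / P * (d (z (Suc t)) - 1/2 * (N (z t - xh (Suc t)))^2))"
      unfolding E_def sum_distrib_left by (intro sum.cong refl) simp
    thus ?thesis by (simp add: distrib_left)
  qed
  finally show ?thesis by (simp add: P_def)
qed

end
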